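(* Let $(A,\diamond,\ast,\varepsilon)$ be a pre-$F$-manifold color algebra, and define for homogeneous $x,y\in A$ (extended bilinearly) $x\cdot y=x\diamond y+\varepsilon(x,y)\,y\diamond x$ and $[x,y]=x\ast y-\varepsilon(x,y)\,y\ast x$. Then: (1) $(A,\cdot,[\,,\,],\varepsilon)$ is an $F$-manifold color algebra; (2) $(A,L,\mathfrak L)$ is a representation of the $F$-manifold color algebra $(A,\cdot,[\,,\,],\varepsilon)$, where $L,\mathfrak L:A\to\mathfrak{gl}(A)$ are given by $L_x y=x\ast y$ and $\mathfrak L_x y=x\diamond y$.
   Context: $G$ is an abelian group and $\varepsilon:G\times G\to\mathbb K\setminus\{0\}$ a skew-symmetric bicharacter: $\varepsilon(a,b)\varepsilon(b,a)=1$, $\varepsilon(a,b+c)=\varepsilon(a,b)\varepsilon(a,c)$, $\varepsilon(a+b,c)=\varepsilon(a,c)\varepsilon(b,c)$; $\mathbb K$ algebraically closed of characteristic zero, spaces finite-dimensional. For homogeneous $x\in A_a,y\in A_b$, $\varepsilon(x,y)$ means $\varepsilon(a,b)$, $\varepsilon(x,y+z)$ means $\varepsilon(a,b+c)$, etc. A Zinbiel color algebra $(A,\diamond,\varepsilon)$: $G$-graded $A$ with bilinear $\diamond$, $A_a\diamond A_b\subseteq A_{a+b}$, $x\diamond(y\diamond z)=(x\diamond y)\diamond z+\varepsilon(x,y)(y\diamond x)\diamond z$. A pre-Lie color algebra $(A,\ast,\varepsilon)$: $G$-graded $A$ with bilinear $\ast$, $A_a\ast A_b\subseteq A_{a+b}$,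 $(x\ast y)\ast z-x\ast(y\ast z)=\varepsilon(x,y)((y\ast x)\ast z-y\ast(x\ast z))$. A pre-$F$-manifold color algebra $(A,\diamond,\ast,\varepsilon)$ is such that $(A,\diamond,\varepsilon)$ is a Zinbiel color algebra, $(A,\ast,\varepsilon)$ is a pre-Lie color algebra, and for all homogeneous $x,y,z,w$: $F_1(x\cdot y,z,w)=x\diamond F_1(y,z,w)+\varepsilon(x,y)y\diamond F_1(x,z,w)$ and $(F_1(x,y,z)+\varepsilon(y,z)F_1(x,z,y)+\varepsilon(x,y+z)F_2(y,z,x))\diamond w=\varepsilon(x,y+z)F_2(y,z,x\diamond w)-x\diamond F_2(y,z,w)$, where $F_1(x,y,z)=x\ast(y\diamond z)-\varepsilon(x,y)y\diamond(x\ast z)-[x,y]\diamond z$ and $F_2(x,y,z)=x\diamond(y\ast z)+\varepsilon(x,y)y\diamond(x\ast z)-(x\cdot y)\ast z$, with $\cdot$ and $[\,,\,]$ as in the claim. An $\varepsilon$-commutative associative algebra: $G$-graded associative $(A,\cdot)$ with $A_aA_b\subseteq A_{a+b}$ and $x\cdot y=\varepsilon(x,y)y\cdot x$. A Lie color algebra: $G$-graded with bilinear $[\,,\,]$, $[A_a,A_b]\subseteq A_{a+b}$, $[x,y]=-\varepsilon(x,y)[y,x]$, $\varepsilon(z,x)[x,[y,z]]+\varepsilon(y,z)[z,[x,y]]+\varepsilon(x,y)[y,[z,x]]=0$. An $F$-manifold color algebra is $(A,\cdot,[\,,\,],\varepsilon)$ with $(A,\cdot,\varepsilon)$ an $\varepsilon$-commutative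 associative algebra and $(A,[\,,\,],\varepsilon)$ a Lie color algebra such that $P_{x\cdot y}(z,w)=x\cdot P_y(z,w)+\varepsilon(x,y)y\cdot P_x(z,w)$, where $P_x(y,z)=[x,y\cdot z]-[x,y]\cdot z-\varepsilon(x,y)y\cdot[x,z]$. A representation of such an $A$ on a $G$-graded space $V$ is a triple $(V,\rho,\mu)$ where $\rho:A\to\mathfrak{gl}(V)$ satisfies $\rho(x)V_a\subseteq V_{a+b}$ for $x\in A_b$ and $\rho([x,y])=\rho(x)\rho(y)-\varepsilon(x,y)\rho(y)\rho(x)$, $\mu:A\to\mathfrak{gl}(V)$ satisfies the same degree condition and $\mu(x\cdot y)=\mu(x)\mu(y)$, and for all homogeneous $x_1,x_2,x_3$: $R(x_1\cdot x_2,x_3)=\mu(x_1)R(x_2,x_3)+\varepsilon(x_1,x_2)\mu(x_2)R(x_1,x_3)$ and $\mu(P_{x_1}(x_2,x_3))=\varepsilon(x_1,x_2+x_3)S(x_2,x_3)\mu(x_1)-\mu(x_1)S(x_2,x_3)$, where $R(x_1,x_2)=\rho(x_1)\mu(x_2)-\varepsilon(x_1,x_2)\mu(x_2)\rho(x_1)-\mu([x_1,x_2])$ and $S(x_1,x_2)=\mu(x_1)\rho(x_2)+\varepsilon(x_1,x_2)\mu(x_2)\rho(x_1)-\rho(x_1\cdot x_2)$. *)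

theory Defs
  imports "HOL-Computational_Algebra.Polynomial"
begin

definition alg_closed_field :: "'k::field itself \<Rightarrow> bool" where
  "alg_closed_field _ \<longleftrightarrow> (\<forall>p :: 'k poly. 0 < degree p \<longrightarrow> (\<exists>x. poly p x = 0))"

definition skew_bicharacter :: "('g::ab_group_add \<Rightarrow> 'g \<Rightarrow> 'k::field) \<Rightarrow> bool" where
  "skew_bicharacter eps \<longleftrightarrow>
     (\<forall>a b. eps a b \<noteq> 0) \<and>
     (\<forall>a b. eps a b * eps b a = 1) \<and>
     (\<forall>a b c. eps a (b + c) = eps a b * eps a c) \<and>
     (\<forall>a b c. eps (a + b) c = eps a c * eps b c)"

text \<open>A G-graded vector space: the whole type 'v is the space (with scalar
multiplication s), V g is the homogeneous component of degree g, and the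
space is the direct sum of the V g.\<close>

definition graded_space :: "('k::field \<Rightarrow> 'v::ab_group_add \<Rightarrow> 'v) \<Rightarrow> ('g \<Rightarrow> 'v set) \<Rightarrow> bool" where
  "graded_space s V \<longleftrightarrow>
     vector_space s \<and> (\<forall>g. module.subspace s (V g)) \<and>
     (\<forall>v. \<exists>!c. finite {g. c g \<noteq> 0} \<and> (\<forall>g. c g \<in> V g) \<and> v = (\<Sum>g\<in>{g. c g \<noteq> 0}. c g))"

definition fin_dim :: "('k::field \<Rightarrow> 'v::ab_group_add \<Rightarrow> 'v) \<Rightarrow> bool" where
  "fin_dim s \<longleftrightarrow> (\<exists>B. finite B \<and> module.span s B = UNIV)"

definition grcomp :: "('g \<Rightarrow> 'v::ab_group_add set) \<Rightarrow> 'v \<Rightarrow> 'g \<Rightarrow> 'v" where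
  "grcomp V v = (THE c. finite {g. c g \<noteq> 0} \<and> (\<forall>g. c g \<in> V g) \<and> v = (\<Sum>g\<in>{g. c g \<noteq> 0}. c g))"

definition grext :: "('g \<Rightarrow> 'v::ab_group_add set) \<Rightarrow> ('g \<Rightarrow> 'g \<Rightarrow> 'v \<Rightarrow> 'v \<Rightarrow> 'v) \<Rightarrow> 'v \<Rightarrow> 'v \<Rightarrow> 'v" where
  "grext V f x y = (\<Sum>a\<in>{a. grcomp V x a \<noteq> 0}. \<Sum>b\<in>{b. grcomp V y b \<noteq> 0}.
       f a b (grcomp V x a) (grcomp V y b))"

definition ind_dot :: "('k::field \<Rightarrow> 'v::ab_group_add \<Rightarrow> 'v) \<Rightarrow> ('g \<Rightarrow> 'v set) \<Rightarrow> ('g \<Rightarrow> 'g \<Rightarrow> 'k)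
    \<Rightarrow> ('v \<Rightarrow> 'v \<Rightarrow> 'v) \<Rightarrow> 'v \<Rightarrow> 'v \<Rightarrow> 'v" where
  "ind_dot s V eps d = grext V (\<lambda>a b x y. d x y + s (eps a b) (d y x))"

definition ind_bracket :: "('k::field \<Rightarrow> 'v::ab_group_add \<Rightarrow> 'v) \<Rightarrow> ('g \<Rightarrow> 'v set) \<Rightarrow> ('g \<Rightarrow> 'g \<Rightarrow> 'k)
    \<Rightarrow> ('v \<Rightarrow> 'v \<Rightarrow> 'v) \<Rightarrow> 'v \<Rightarrow> 'v \<Rightarrow> 'v" where
  "ind_bracket s V eps m = grext V (\<lambda>a b x y. m x y - s (eps a b) (m y x))"

definition bilinear_map :: "('k::field \<Rightarrow> 'u::ab_group_add \<Rightarrow> 'u) \<Rightarrow> ('k \<Rightarrow> 'v::ab_group_add \<Rightarrow> 'v)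
    \<Rightarrow> ('k \<Rightarrow> 'w::ab_group_add \<Rightarrow> 'w) \<Rightarrow> ('u \<Rightarrow> 'v \<Rightarrow> 'w) \<Rightarrow> bool" where
  "bilinear_map s1 s2 s3 f \<longleftrightarrow>
     (\<forall>x. Vector_Spaces.linear s2 s3 (f x)) \<and> (\<forall>y. Vector_Spaces.linear s1 s3 (\<lambda>x. f x y))"

definition graded_op :: "('g::ab_group_add \<Rightarrow> 'u set) \<Rightarrow> ('g \<Rightarrow> 'v set) \<Rightarrow> ('u \<Rightarrow> 'v \<Rightarrow> 'v) \<Rightarrow> bool" where
  "graded_op U V f \<longleftrightarrow> (\<forall>a b x y. x \<in> U a \<longrightarrow> y \<in> V b \<longrightarrow> f x y \<in> V (a + b))"

definition zinbiel_color :: "('k::field \<Rightarrow> 'v::ab_group_add \<Rightarrow> 'v) \<Rightarrow> ('g::ab_group_add \<Rightarrow> 'v set)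
    \<Rightarrow> ('g \<Rightarrow> 'g \<Rightarrow> 'k) \<Rightarrow> ('v \<Rightarrow> 'v \<Rightarrow> 'v) \<Rightarrow> bool" where
  "zinbiel_color s V eps d \<longleftrightarrow> graded_space s V \<and> bilinear_map s s s d \<and> graded_op V V d \<and>
     (\<forall>a b c x y z. x \<in> V a \<longrightarrow> y \<in> V b \<longrightarrow> z \<in> V c \<longrightarrow>
        d x (d y z) = d (d x y) z + s (eps a b) (d (d y x) z))"

definition prelie_color :: "('k::field \<Rightarrow> 'v::ab_group_add \<Rightarrow> 'v) \<Rightarrow> ('g::ab_group_add \<Rightarrow> 'v set)
    \<Rightarrow> ('g \<Rightarrow> 'g \<Rightarrow> 'k) \<Rightarrow> ('v \<Rightarrow> 'v \<Rightarrow> 'v) \<Rightarrow> bool" where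
  "prelie_color s V eps m \<longleftrightarrow> graded_space s V \<and> bilinear_map s s s m \<and> graded_op V V m \<and>
     (\<forall>a b c x y z. x \<in> V a \<longrightarrow> y \<in> V b \<longrightarrow> z \<in> V c \<longrightarrow>
        m (m x y) z - m x (m y z) = s (eps a b) (m (m y x) z - m y (m x z)))"

text \<open>F1 and F2; the degree arguments a, b are those of the first two arguments.\<close>
definition F1 :: "('k::field \<Rightarrow> 'v::ab_group_add \<Rightarrow> 'v) \<Rightarrow> ('g::ab_group_add \<Rightarrow> 'v set)
    \<Rightarrow> ('g \<Rightarrow> 'g \<Rightarrow> 'k) \<Rightarrow> ('v \<Rightarrow> 'v \<Rightarrow> 'v) \<Rightarrow> ('v \<Rightarrow> 'v \<Rightarrow> 'v) \<Rightarrow> 'g \<Rightarrow> 'g \<Rightarrow> 'v \<Rightarrow> 'v \<Rightarrow> 'v \<Rightarrow> 'v" where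
  "F1 s V eps d m a b x y z =
     m x (d y z) - s (eps a b) (d y (m x z)) - d (ind_bracket s V eps m x y) z"

definition F2 :: "('k::field \<Rightarrow> 'v::ab_group_add \<Rightarrow> 'v) \<Rightarrow> ('g::ab_group_add \<Rightarrow> 'v set)
    \<Rightarrow> ('g \<Rightarrow> 'g \<Rightarrow> 'k) \<Rightarrow> ('v \<Rightarrow> 'v \<Rightarrow> 'v) \<Rightarrow> ('v \<Rightarrow> 'v \<Rightarrow> 'v) \<Rightarrow> 'g \<Rightarrow> 'g \<Rightarrow> 'v \<Rightarrow> 'v \<Rightarrow> 'v \<Rightarrow> 'v" where
  "F2 s V eps d m a b x y z =
     d x (m y z) + s (eps a b) (d y (m x z)) - m (ind_dot s V eps d x y) z"

definition pre_F_manifold_color :: "('k::field \<Rightarrow> 'v::ab_group_add \<Rightarrow> 'v) \<Rightarrow> ('g::ab_group_add \<Rightarrow> 'v set)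
    \<Rightarrow> ('g \<Rightarrow> 'g \<Rightarrow> 'k) \<Rightarrow> ('v \<Rightarrow> 'v \<Rightarrow> 'v) \<Rightarrow> ('v \<Rightarrow> 'v \<Rightarrow> 'v) \<Rightarrow> bool" where
  "pre_F_manifold_color s V eps d m \<longleftrightarrow>
     zinbiel_color s V eps d \<and> prelie_color s V eps m \<and>
     (\<forall>a b c e x y z w. x \<in> V a \<longrightarrow> y \<in> V b \<longrightarrow> z \<in> V c \<longrightarrow> w \<in> V e \<longrightarrow>
        F1 s V eps d m (a + b) c (ind_dot s V eps d x y) z w =
          d x (F1 s V eps d m b c y z w) + s (eps a b) (d y (F1 s V eps d m a c x z w))) \<and>
     (\<forall>a b c e x y z w. x \<in> V a \<longrightarrow> y \<in> V b \<longrightarrow> z \<in> V c \<longrightarrow> w \<in> V e \<longrightarrow>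
        d (F1 s V eps d m a b x y z + s (eps b c) (F1 s V eps d m a c x z y)
             + s (eps a (b + c)) (F2 s V eps d m b c y z x)) w =
          s (eps a (b + c)) (F2 s V eps d m b c y z (d x w)) - d x (F2 s V eps d m b c y z w))"

definition eps_comm_assoc :: "('k::field \<Rightarrow> 'v::ab_group_add \<Rightarrow> 'v) \<Rightarrow> ('g::ab_group_add \<Rightarrow> 'v set)
    \<Rightarrow> ('g \<Rightarrow> 'g \<Rightarrow> 'k) \<Rightarrow> ('v \<Rightarrow> 'v \<Rightarrow> 'v) \<Rightarrow> bool" where
  "eps_comm_assoc s V eps p \<longleftrightarrow> graded_space s V \<and> bilinear_map s s s p \<and> graded_op V V p \<and>
     (\<forall>x y z. p (p x y) z = p x (p y z)) \<and>
     (\<forall>a b x y. x \<in> V a \<longrightarrow> y \<in> V b \<longrightarrow> p x y = s (eps a b) (p y x))"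

definition lie_color :: "('k::field \<Rightarrow> 'v::ab_group_add \<Rightarrow> 'v) \<Rightarrow> ('g::ab_group_add \<Rightarrow> 'v set)
    \<Rightarrow> ('g \<Rightarrow> 'g \<Rightarrow> 'k) \<Rightarrow> ('v \<Rightarrow> 'v \<Rightarrow> 'v) \<Rightarrow> bool" where
  "lie_color s V eps br \<longleftrightarrow> graded_space s V \<and> bilinear_map s s s br \<and> graded_op V V br \<and>
     (\<forall>a b x y. x \<in> V a \<longrightarrow> y \<in> V b \<longrightarrow> br x y = - s (eps a b) (br y x)) \<and>
     (\<forall>a b c x y z. x \<in> V a \<longrightarrow> y \<in> V b \<longrightarrow> z \<in> V c \<longrightarrow>
        s (eps c a) (br x (br y z)) + s (eps b c) (br z (br x y)) + s (eps a b) (br y (br z x)) = 0)"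

text \<open>P_x(y,z); a, b are the degrees of x, y.\<close>
definition Pfm :: "('k::field \<Rightarrow> 'v::ab_group_add \<Rightarrow> 'v) \<Rightarrow> ('g \<Rightarrow> 'g \<Rightarrow> 'k)
    \<Rightarrow> ('v \<Rightarrow> 'v \<Rightarrow> 'v) \<Rightarrow> ('v \<Rightarrow> 'v \<Rightarrow> 'v) \<Rightarrow> 'g \<Rightarrow> 'g \<Rightarrow> 'v \<Rightarrow> 'v \<Rightarrow> 'v \<Rightarrow> 'v" where
  "Pfm s eps p br a b x y z = br x (p y z) - p (br x y) z - s (eps a b) (p y (br x z))"

definition F_manifold_color :: "('k::field \<Rightarrow> 'v::ab_group_add \<Rightarrow> 'v) \<Rightarrow> ('g::ab_group_add \<Rightarrow> 'v set)
    \<Rightarrow> ('g \<Rightarrow> 'g \<Rightarrow> 'k) \<Rightarrow> ('v \<Rightarrow> 'v \<Rightarrow> 'v) \<Rightarrow> ('v \<Rightarrow> 'v \<Rightarrow> 'v) \<Rightarrow> bool" where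
  "F_manifold_color s V eps p br \<longleftrightarrow> eps_comm_assoc s V eps p \<and> lie_color s V eps br \<and>
     (\<forall>a b c x y z w. x \<in> V a \<longrightarrow> y \<in> V b \<longrightarrow> z \<in> V c \<longrightarrow>
        Pfm s eps p br (a + b) c (p x y) z w =
          p x (Pfm s eps p br b c y z w) + s (eps a b) (p y (Pfm s eps p br a c x z w)))"

text \<open>Operator identities
are stated pointwise on all vectors v of W.\<close>
definition fm_representation :: "('k::field \<Rightarrow> 'v::ab_group_add \<Rightarrow> 'v) \<Rightarrow> ('g::ab_group_add \<Rightarrow> 'v set)
    \<Rightarrow> ('g \<Rightarrow> 'g \<Rightarrow> 'k) \<Rightarrow> ('v \<Rightarrow> 'v \<Rightarrow> 'v) \<Rightarrow> ('v \<Rightarrow> 'v \<Rightarrow> 'v)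
    \<Rightarrow> ('k \<Rightarrow> 'w::ab_group_add \<Rightarrow> 'w) \<Rightarrow> ('g \<Rightarrow> 'w set)
    \<Rightarrow> ('v \<Rightarrow> 'w \<Rightarrow> 'w) \<Rightarrow> ('v \<Rightarrow> 'w \<Rightarrow> 'w) \<Rightarrow> bool" where
  "fm_representation s V eps p br sW VW rho mu \<longleftrightarrow>
     graded_space sW VW \<and>
     bilinear_map s sW sW rho \<and> graded_op V VW rho \<and>
     bilinear_map s sW sW mu \<and> graded_op V VW mu \<and>
     (\<forall>a b x y v. x \<in> V a \<longrightarrow> y \<in> V b \<longrightarrow>
        rho (br x y) v = rho x (rho y v) - sW (eps a b) (rho y (rho x v))) \<and>
     (\<forall>x y v. mu (p x y) v = mu x (mu y v)) \<and>
     (let R = (\<lambda>a b x1 x2 v. rho x1 (mu x2 v) - sW (eps a b) (mu x2 (rho x1 v)) - mu (br x1 x2) v);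
          S = (\<lambda>a b x1 x2 v. mu x1 (rho x2 v) + sW (eps a b) (mu x2 (rho x1 v)) - rho (p x1 x2) v)
      in (\<forall>a b c x1 x2 x3 v. x1 \<in> V a \<longrightarrow> x2 \<in> V b \<longrightarrow> x3 \<in> V c \<longrightarrow>
            R (a + b) c (p x1 x2) x3 v = mu x1 (R b c x2 x3 v) + sW (eps a b) (mu x2 (R a c x1 x3 v))) \<and>
         (\<forall>a b c x1 x2 x3 v. x1 \<in> V a \<longrightarrow> x2 \<in> V b \<longrightarrow> x3 \<in> V c \<longrightarrow>
            mu (Pfm s eps p br a b x1 x2 x3) v =
              sW (eps a (b + c)) (S b c x2 x3 (mu x1 v)) - mu x1 (S b c x2 x3 v)))"

end

theory Submission
  imports Defs
begin


lemma vs_of_graded: "graded_space s V \<Longrightarrow> vector_space s"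
  by (simp add: graded_space_def)

lemma linearI':
  assumes "vector_space s" "\<And>x y. f (x + y) = f x + f y" "\<And>c x. f (s c x) = s c (f x)"
  shows "Vector_Spaces.linear s s f"
  using assms unfolding module_hom_iff_linear[symmetric] module_hom_def module_hom_axioms_def
    module_iff_vector_space by auto

lemma linear_add: "Vector_Spaces.linear s1 s2 f \<Longrightarrow> f (x + y) = f x + f y"
  by (metis module_hom.add module_hom_iff_linear)
lemma linear_scale: "Vector_Spaces.linear s1 s2 f \<Longrightarrow> f (s1 c x) = s2 c (f x)"
  by (metis module_hom.scale module_hom_iff_linear)

lemma sum_supp_ext:
  assumes "finite A" "{g. c g \<noteq> 0} \<subseteq> A"
  shows "(\<Sum>g\<in>{g. c g \<noteq> 0}. c g) = (\<Sum>g\<in>A. (c g :: 'v::ab_group_add))"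
  by (rule sum.mono_neutral_left) (use assms in auto)

context
  fixes s :: "'k::field \<Rightarrow> 'v::ab_group_add \<Rightarrow> 'v" and V :: "'g \<Rightarrow> 'v set"
  assumes gs: "graded_space s V"
begin

lemma gs_vs: "vector_space s" using gs by (simp add: graded_space_def)
lemma gs_mod: "module s" using gs_vs by (simp add: module_iff_vector_space)
lemma gs_sub: "module.subspace s (V g)" using gs by (simp add: graded_space_def)
lemma gs_0: "0 \<in> V g" using module.subspace_0[OF gs_mod gs_sub] .
lemma gs_add: "x \<in> V g \<Longrightarrow> y \<in> V g \<Longrightarrow> x + y \<in> V g"
  using module.subspace_add[OF gs_mod gs_sub] .
lemma gs_scale: "x \<in> V g \<Longrightarrow> s c x \<in> V g"
  using gs_sub[of g] by (simp add: module.subspace_def[OF gs_mod])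

lemma grcomp_props:
  "finite {g. grcomp V v g \<noteq> 0} \<and> (\<forall>g. grcomp V v g \<in> V g) \<and>
   v = (\<Sum>g\<in>{g. grcomp V v g \<noteq> 0}. grcomp V v g)"
proof -
  have "\<exists>!c. finite {g. c g \<noteq> 0} \<and> (\<forall>g. c g \<in> V g) \<and> v = (\<Sum>g\<in>{g. c g \<noteq> 0}. c g)"
    using gs by (simp add: graded_space_def)
  from theI'[OF this] show ?thesis unfolding grcomp_def .
qed

lemma grcomp_fin: "finite {g. grcomp V v g \<noteq> 0}" using grcomp_props by blast
lemma grcomp_in: "grcomp V v g \<in> V g" using grcomp_props by blast
lemma grcomp_sum: "v = (\<Sum>g\<in>{g. grcomp V v g \<noteq> 0}. grcomp V v g)" using grcomp_props by blast

lemma grcomp_unique: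
  assumes "finite {g. c g \<noteq> 0}" "\<forall>g. c g \<in> V g" "v = (\<Sum>g\<in>{g. c g \<noteq> 0}. c g)"
  shows "grcomp V v = c"
  unfolding grcomp_def
  by (rule the1_equality) (use gs assms in \<open>simp_all add: graded_space_def\<close>)

lemma grcomp_hom:
  assumes "x \<in> V a"
  shows "grcomp V x = (\<lambda>g. if g = a then x else 0)"
proof (rule grcomp_unique)
  have e: "{g. (if g = a then x else 0) \<noteq> 0} = (if x = 0 then {} else {a})" by auto
  show "finite {g. (if g = a then x else 0) \<noteq> 0}" unfolding e by simp
  show "\<forall>g. (if g = a then x else 0) \<in> V g" using assms gs_0 by auto
  show "x = (\<Sum>g\<in>{g. (if g = a then x else 0) \<noteq> 0}. if g = a then x else 0)" unfolding e by simp
qed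

lemma grcomp_add: "grcomp V (x + y) = (\<lambda>g. grcomp V x g + grcomp V y g)"
proof (rule grcomp_unique)
  let ?A = "{g. grcomp V x g \<noteq> 0} \<union> {g. grcomp V y g \<noteq> 0}"
  have fA: "finite ?A" using grcomp_fin by simp
  have sub: "{g. grcomp V x g + grcomp V y g \<noteq> 0} \<subseteq> ?A" by auto
  show "finite {g. grcomp V x g + grcomp V y g \<noteq> 0}" using fA sub finite_subset by blast
  show "\<forall>g. grcomp V x g + grcomp V y g \<in> V g" using grcomp_in gs_add by blast
  have "(\<Sum>g\<in>{g. grcomp V x g + grcomp V y g \<noteq> 0}. grcomp V x g + grcomp V y g)
     = (\<Sum>g\<in>?A. grcomp V x g + grcomp V y g)" by (rule sum_supp_ext[OF fA sub])
  also have "\<dots> = (\<Sum>g\<in>?A. grcomp V x g) + (\<Sum>g\<in>?A. grcomp V y g)" by (simp add: sum.distrib)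
  also have "(\<Sum>g\<in>?A. grcomp V x g) = x"
    using sum_supp_ext[OF fA, of "grcomp V x"] grcomp_sum[of x] by auto
  also have "(\<Sum>g\<in>?A. grcomp V y g) = y"
    using sum_supp_ext[OF fA, of "grcomp V y"] grcomp_sum[of y] by auto
  finally show "x + y = (\<Sum>g\<in>{g. grcomp V x g + grcomp V y g \<noteq> 0}. grcomp V x g + grcomp V y g)" by simp
qed

lemma grcomp_scale: "grcomp V (s c x) = (\<lambda>g. s c (grcomp V x g))"
proof (rule grcomp_unique)
  let ?A = "{g. grcomp V x g \<noteq> 0}"
  have fA: "finite ?A" using grcomp_fin by simp
  have sub: "{g. s c (grcomp V x g) \<noteq> 0} \<subseteq> ?A" using module.scale_zero_right[OF gs_mod] by auto
  show "finite {g. s c (grcomp V x g) \<noteq> 0}" using fA sub finite_subset by blast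
  show "\<forall>g. s c (grcomp V x g) \<in> V g" using grcomp_in gs_scale by blast
  have "(\<Sum>g\<in>{g. s c (grcomp V x g) \<noteq> 0}. s c (grcomp V x g)) = (\<Sum>g\<in>?A. s c (grcomp V x g))"
    by (rule sum_supp_ext[OF fA sub])
  also have "\<dots> = s c (\<Sum>g\<in>?A. grcomp V x g)" by (simp add: module.scale_sum_right[OF gs_mod])
  also have "\<dots> = s c x" using grcomp_sum[of x] by simp
  finally show "s c x = (\<Sum>g\<in>{g. s c (grcomp V x g) \<noteq> 0}. s c (grcomp V x g))" by simp
qed

lemma grext_sum:
  assumes "finite A" "{g. grcomp V x g \<noteq> 0} \<subseteq> A" "finite B" "{g. grcomp V y g \<noteq> 0} \<subseteq> B"
    and z1: "\<And>a b u. f a b 0 u = 0" and z2: "\<And>a b u. f a b u 0 = 0"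
  shows "grext V f x y = (\<Sum>a\<in>A. \<Sum>b\<in>B. f a b (grcomp V x a) (grcomp V y b))"
proof -
  have "grext V f x y = (\<Sum>a\<in>A. \<Sum>b\<in>{b. grcomp V y b \<noteq> 0}. f a b (grcomp V x a) (grcomp V y b))"
    unfolding grext_def by (rule sum.mono_neutral_left) (use assms in auto)
  also have "\<dots> = (\<Sum>a\<in>A. \<Sum>b\<in>B. f a b (grcomp V x a) (grcomp V y b))"
    by (rule sum.cong[OF refl], rule sum.mono_neutral_left) (use assms in auto)
  finally show ?thesis .
qed

lemma grext_hom:
  assumes "x \<in> V a" "y \<in> V b" and z1: "\<And>a b u. f a b 0 u = 0" and z2: "\<And>a b u. f a b u 0 = 0"
  shows "grext V f x y = f a b x y"
proof -
  have "grext V f x y = (\<Sum>a'\<in>{a}. \<Sum>b'\<in>{b}. f a' b' (grcomp V x a') (grcomp V y b'))"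
    by (rule grext_sum) (use assms grcomp_hom in auto)
  then show ?thesis using grcomp_hom[OF assms(1)] grcomp_hom[OF assms(2)] by simp
qed

lemma graded_induct:
  assumes "P 0" "\<And>x y. P x \<Longrightarrow> P y \<Longrightarrow> P (x + y)" "\<And>a x. x \<in> V a \<Longrightarrow> P x"
  shows "P v"
proof -
  have "finite F \<Longrightarrow> P (\<Sum>g\<in>F. grcomp V v g)" for F
  proof (induction F rule: finite_induct)
    case (insert g F)
    then show ?case using assms(2)[OF assms(3)[OF grcomp_in[of v g]] insert.IH] by simp
  qed (use assms in auto)
  then show ?thesis using grcomp_sum[of v] grcomp_fin[of v] by metis
qed


lemma grext_addL:
  assumes ad: "\<And>a b u u' w. f a b (u + u') w = f a b u w + f a b u' w"
    and z1: "\<And>a b u. f a b 0 u = 0" and z2: "\<And>a b u. f a b u 0 = 0"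
  shows "grext V f (x + x') y = grext V f x y + grext V f x' y"
proof -
  let ?A = "{g. grcomp V x g \<noteq> 0} \<union> {g. grcomp V x' g \<noteq> 0} \<union> {g. grcomp V (x + x') g \<noteq> 0}"
  let ?B = "{g. grcomp V y g \<noteq> 0}"
  have fA: "finite ?A" and fB: "finite ?B" using grcomp_fin by auto
  have e: "grext V f u y = (\<Sum>a\<in>?A. \<Sum>b\<in>?B. f a b (grcomp V u a) (grcomp V y b))"
    if "u \<in> {x, x', x + x'}" for u
    by (rule grext_sum[OF fA _ fB]) (use that z1 z2 in auto)
  show ?thesis using e by (simp add: grcomp_add ad sum.distrib)
qed

lemma grext_addR:
  assumes ad: "\<And>a b u u' w. f a b w (u + u') = f a b w u + f a b w u'"
    and z1: "\<And>a b u. f a b 0 u = 0" and z2: "\<And>a b u. f a b u 0 = 0"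
  shows "grext V f y (x + x') = grext V f y x + grext V f y x'"
proof -
  let ?A = "{g. grcomp V x g \<noteq> 0} \<union> {g. grcomp V x' g \<noteq> 0} \<union> {g. grcomp V (x + x') g \<noteq> 0}"
  let ?B = "{g. grcomp V y g \<noteq> 0}"
  have fA: "finite ?A" and fB: "finite ?B" using grcomp_fin by auto
  have e: "grext V f y u = (\<Sum>b\<in>?B. \<Sum>a\<in>?A. f b a (grcomp V y b) (grcomp V u a))"
    if "u \<in> {x, x', x + x'}" for u
    by (rule grext_sum[OF fB _ fA]) (use that z1 z2 in auto)
  show ?thesis using e by (simp add: grcomp_add ad sum.distrib)
qed

lemma grext_scaleL:
  assumes sc: "\<And>a b u w. f a b (s c u) w = s c (f a b u w)"
    and z1: "\<And>a b u. f a b 0 u = 0" and z2: "\<And>a b u. f a b u 0 = 0"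
  shows "grext V f (s c x) y = s c (grext V f x y)"
proof -
  let ?A = "{g. grcomp V x g \<noteq> 0} \<union> {g. grcomp V (s c x) g \<noteq> 0}"
  let ?B = "{g. grcomp V y g \<noteq> 0}"
  have fA: "finite ?A" and fB: "finite ?B" using grcomp_fin by auto
  have e: "grext V f u y = (\<Sum>a\<in>?A. \<Sum>b\<in>?B. f a b (grcomp V u a) (grcomp V y b))"
    if "u \<in> {x, s c x}" for u
    by (rule grext_sum[OF fA _ fB]) (use that z1 z2 in auto)
  show ?thesis using e by (simp add: grcomp_scale sc module.scale_sum_right[OF gs_mod])
qed

lemma grext_scaleR:
  assumes sc: "\<And>a b u w. f a b w (s c u) = s c (f a b w u)"
    and z1: "\<And>a b u. f a b 0 u = 0" and z2: "\<And>a b u. f a b u 0 = 0"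
  shows "grext V f y (s c x) = s c (grext V f y x)"
proof -
  let ?A = "{g. grcomp V x g \<noteq> 0} \<union> {g. grcomp V (s c x) g \<noteq> 0}"
  let ?B = "{g. grcomp V y g \<noteq> 0}"
  have fA: "finite ?A" and fB: "finite ?B" using grcomp_fin by auto
  have e: "grext V f y u = (\<Sum>b\<in>?B. \<Sum>a\<in>?A. f b a (grcomp V y b) (grcomp V u a))"
    if "u \<in> {x, s c x}" for u
    by (rule grext_sum[OF fB _ fA]) (use that z1 z2 in auto)
  show ?thesis using e by (simp add: grcomp_scale sc module.scale_sum_right[OF gs_mod])
qed

end



locale preF =
  fixes s :: "'k::field \<Rightarrow> 'v::ab_group_add \<Rightarrow> 'v" and V :: "'g::ab_group_add \<Rightarrow> 'v set"
    and eps :: "'g \<Rightarrow> 'g \<Rightarrow> 'k" and d m :: "'v \<Rightarrow> 'v \<Rightarrow> 'v"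
  assumes bich: "skew_bicharacter eps" and pre: "pre_F_manifold_color s V eps d m"
begin

lemma zin: "zinbiel_color s V eps d" using pre by (simp add: pre_F_manifold_color_def)
lemma pl: "prelie_color s V eps m" using pre by (simp add: pre_F_manifold_color_def)
lemma gs: "graded_space s V" using zin by (simp add: zinbiel_color_def)

sublocale vector_space s using gs_vs[OF gs] .

lemma d_bil: "bilinear_map s s s d" using zin by (simp add: zinbiel_color_def)
lemma m_bil: "bilinear_map s s s m" using pl by (simp add: prelie_color_def)

lemma d_linR: "module_hom s s (d x)" using d_bil by (simp add: bilinear_map_def module_hom_iff_linear)
lemma d_linL: "module_hom s s (\<lambda>x. d x y)" using d_bil by (simp add: bilinear_map_def module_hom_iff_linear)
lemma m_linR: "module_hom s s (m x)" using m_bil by (simp add: bilinear_map_def module_hom_iff_linear)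
lemma m_linL: "module_hom s s (\<lambda>x. m x y)" using m_bil by (simp add: bilinear_map_def module_hom_iff_linear)

lemma d_simps [simp]:
  "d (x + y) z = d x z + d y z" "d z (x + y) = d z x + d z y"
  "d (x - y) z = d x z - d y z" "d z (x - y) = d z x - d z y"
  "d (- x) z = - d x z" "d z (- x) = - d z x"
  "d (s c x) z = s c (d x z)" "d z (s c x) = s c (d z x)"
  "d 0 z = 0" "d z 0 = 0"
  using module_hom.add[OF d_linL] module_hom.add[OF d_linR]
    module_hom.diff[OF d_linL] module_hom.diff[OF d_linR]
    module_hom.neg[OF d_linL] module_hom.neg[OF d_linR]
    module_hom.scale[OF d_linL] module_hom.scale[OF d_linR]
    module_hom.zero[OF d_linL] module_hom.zero[OF d_linR] by auto

lemma m_simps [simp]: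
  "m (x + y) z = m x z + m y z" "m z (x + y) = m z x + m z y"
  "m (x - y) z = m x z - m y z" "m z (x - y) = m z x - m z y"
  "m (- x) z = - m x z" "m z (- x) = - m z x"
  "m (s c x) z = s c (m x z)" "m z (s c x) = s c (m z x)"
  "m 0 z = 0" "m z 0 = 0"
  using module_hom.add[OF m_linL] module_hom.add[OF m_linR]
    module_hom.diff[OF m_linL] module_hom.diff[OF m_linR]
    module_hom.neg[OF m_linL] module_hom.neg[OF m_linR]
    module_hom.scale[OF m_linL] module_hom.scale[OF m_linR]
    module_hom.zero[OF m_linL] module_hom.zero[OF m_linR] by auto

lemma eps_nz: "eps a b \<noteq> 0" using bich by (simp add: skew_bicharacter_def)
lemma eps_skew: "eps a b * eps b a = 1" using bich by (simp add: skew_bicharacter_def)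
lemma eps_addR: "eps a (b + c) = eps a b * eps a c" using bich by (simp add: skew_bicharacter_def)
lemma eps_addL: "eps (a + b) c = eps a c * eps b c" using bich by (simp add: skew_bicharacter_def)
lemmas eps_add = eps_addR eps_addL

lemma skew_cancel:
 "eps p q * eps q p = 1"
 "eps p q * (eps q p * z) = z"
 "eps p q * (w * eps q p) = w"
 "eps p q * (w * (eps q p * z)) = w * z"
 "eps p q * (w1 * (w2 * eps q p)) = w1 * w2"
 "eps p q * (w1 * (w2 * (eps q p * z))) = w1 * (w2 * z)"
 "eps p q * (w1 * (w2 * (w3 * eps q p))) = w1 * (w2 * w3)"
 "eps p q * (w1 * (w2 * (w3 * (eps q p * z)))) = w1 * (w2 * (w3 * z))"
  using eps_skew[of p q] by (simp_all add: mult_ac)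

lemma eps_skew2: "eps a b * (eps b a * z) = z" by (simp add: eps_skew flip: mult.assoc)

lemma V0: "0 \<in> V g" by (rule gs_0[OF gs])
lemma Vadd: "x \<in> V g \<Longrightarrow> y \<in> V g \<Longrightarrow> x + y \<in> V g" by (rule gs_add[OF gs])
lemma Vscale: "x \<in> V g \<Longrightarrow> s c x \<in> V g" by (rule gs_scale[OF gs])
lemma Vdiff: "x \<in> V g \<Longrightarrow> y \<in> V g \<Longrightarrow> x - y \<in> V g"
  using module.subspace_diff[OF gs_mod[OF gs] gs_sub[OF gs]] .

lemma d_deg: "x \<in> V a \<Longrightarrow> y \<in> V b \<Longrightarrow> d x y \<in> V (a + b)"
  using zin by (simp add: zinbiel_color_def graded_op_def)
lemma m_deg: "x \<in> V a \<Longrightarrow> y \<in> V b \<Longrightarrow> m x y \<in> V (a + b)"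
  using pl by (simp add: prelie_color_def graded_op_def)

abbreviation dot where "dot \<equiv> ind_dot s V eps d"
abbreviation br where "br \<equiv> ind_bracket s V eps m"

lemma dot_hom: "x \<in> V a \<Longrightarrow> y \<in> V b \<Longrightarrow> dot x y = d x y + s (eps a b) (d y x)"
  unfolding ind_dot_def by (rule grext_hom[OF gs]) auto
lemma br_hom: "x \<in> V a \<Longrightarrow> y \<in> V b \<Longrightarrow> br x y = m x y - s (eps a b) (m y x)"
  unfolding ind_bracket_def by (rule grext_hom[OF gs]) auto

lemma dot_deg: "x \<in> V a \<Longrightarrow> y \<in> V b \<Longrightarrow> dot x y \<in> V (a + b)"
  using dot_hom d_deg[of x a y b] d_deg[of y b x a] by (simp add: Vadd Vscale add.commute)
lemma br_deg: "x \<in> V a \<Longrightarrow> y \<in> V b \<Longrightarrow> br x y \<in> V (a + b)"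
  using br_hom m_deg[of x a y b] m_deg[of y b x a] by (simp add: Vdiff Vscale add.commute)

lemma dot_simps [simp]:
  "dot (x + y) z = dot x z + dot y z" "dot z (x + y) = dot z x + dot z y"
  "dot (s c x) z = s c (dot x z)" "dot z (s c x) = s c (dot z x)"
  unfolding ind_dot_def
  by (rule grext_addL[OF gs] grext_addR[OF gs] grext_scaleL[OF gs] grext_scaleR[OF gs];
      simp add: algebra_simps scale_left_commute)+

lemma br_simps [simp]:
  "br (x + y) z = br x z + br y z" "br z (x + y) = br z x + br z y"
  "br (s c x) z = s c (br x z)" "br z (s c x) = s c (br z x)"
  unfolding ind_bracket_def
  by (rule grext_addL[OF gs] grext_addR[OF gs] grext_scaleL[OF gs] grext_scaleR[OF gs];
      simp add: algebra_simps scale_left_commute)+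

lemma dot_bil: "bilinear_map s s s dot"
  unfolding bilinear_map_def by (auto intro!: linearI' vector_space_axioms)
lemma br_bil: "bilinear_map s s s br"
  unfolding bilinear_map_def by (auto intro!: linearI' vector_space_axioms)


lemma dot_lin: "module_hom s s (dot x)" "module_hom s s (\<lambda>x. dot x y)"
  using dot_bil by (simp_all add: bilinear_map_def module_hom_iff_linear)
lemma br_lin: "module_hom s s (br x)" "module_hom s s (\<lambda>x. br x y)"
  using br_bil by (simp_all add: bilinear_map_def module_hom_iff_linear)

lemma dot_simps2 [simp]:
  "dot (x - y) z = dot x z - dot y z" "dot z (x - y) = dot z x - dot z y"
  "dot (- x) z = - dot x z" "dot z (- x) = - dot z x" "dot 0 z = 0" "dot z 0 = 0"
  using module_hom.diff[OF dot_lin(1)] module_hom.diff[OF dot_lin(2)]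
    module_hom.neg[OF dot_lin(1)] module_hom.neg[OF dot_lin(2)]
    module_hom.zero[OF dot_lin(1)] module_hom.zero[OF dot_lin(2)] by auto
lemma br_simps2 [simp]:
  "br (x - y) z = br x z - br y z" "br z (x - y) = br z x - br z y"
  "br (- x) z = - br x z" "br z (- x) = - br z x" "br 0 z = 0" "br z 0 = 0"
  using module_hom.diff[OF br_lin(1)] module_hom.diff[OF br_lin(2)]
    module_hom.neg[OF br_lin(1)] module_hom.neg[OF br_lin(2)]
    module_hom.zero[OF br_lin(1)] module_hom.zero[OF br_lin(2)] by auto

lemma eps_inv: "eps b a = inverse (eps a b)"
  using eps_skew[of a b] eps_nz[of a b] by (simp add: field_simps)

lemma zin_ax: "x \<in> V a \<Longrightarrow> y \<in> V b \<Longrightarrow> z \<in> V c \<Longrightarrow>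
   d x (d y z) = d (d x y) z + s (eps a b) (d (d y x) z)"
  using zin unfolding zinbiel_color_def by blast
lemma zin': "x \<in> V a \<Longrightarrow> y \<in> V b \<Longrightarrow> d x (d y z) = d (dot x y) z"
proof -
  assume x: "x \<in> V a" and y: "y \<in> V b"
  have "d x (d y z') = d (dot x y) z'" if "z' \<in> V c" for z' c
    using zin_ax[OF x y that] dot_hom[OF x y] by simp
  then show ?thesis by (induction z rule: graded_induct[OF gs]) auto
qed

lemma dot_comm: "x \<in> V a \<Longrightarrow> y \<in> V b \<Longrightarrow> dot x y = s (eps a b) (dot y x)"
  by (simp add: dot_hom scale_right_distrib eps_skew add.commute)

lemma dot_assoc_hom:
  assumes x: "x \<in> V a" and y: "y \<in> V b" and z: "z \<in> V c"
  shows "dot (dot x y) z = dot x (dot y z)"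
proof -
  have xy: "dot x y \<in> V (a + b)" and yz: "dot y z \<in> V (b + c)" using dot_deg x y z by auto
  have 1: "d z (dot x y) = s (eps c a) (d (dot x z) y) + s (eps a b * eps c b) (d (dot y z) x)"
    using dot_hom[OF x y] zin'[OF z x] zin'[OF z y] dot_comm[OF z x] dot_comm[OF z y]
    by (simp add: mult.commute)
  have "dot (dot x y) z = d x (d y z) + s (eps (a + b) c) (d z (dot x y))"
    using dot_hom[OF xy z] zin'[OF x y] by simp
  also have "\<dots> = d x (d y z) + s (eps b c) (d (dot x z) y) + s (eps a (b + c)) (d (dot y z) x)"
    unfolding 1 using eps_skew[of a c] eps_skew[of b c]
    by (simp add: eps_add scale_right_distrib add.assoc mult_ac)
  also have "\<dots> = dot x (dot y z)"
    using dot_hom[OF x yz] dot_hom[OF y z] zin'[OF x z] by (simp add: add.assoc)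
  finally show ?thesis .
qed

lemma dot_assoc: "dot (dot x y) z = dot x (dot y z)"
proof (induction x arbitrary: y z rule: graded_induct[OF gs])
  case (3 a x)
  then show ?case
  proof (induction y arbitrary: z rule: graded_induct[OF gs])
    case (3 b y)
    then show ?case
      by (induction z rule: graded_induct[OF gs]) (auto simp: dot_assoc_hom)
  qed auto
qed auto

lemma ECA: "eps_comm_assoc s V eps dot"
  unfolding eps_comm_assoc_def graded_op_def
  using gs dot_bil dot_deg dot_assoc dot_comm by blast


lemma br_anti: "x \<in> V a \<Longrightarrow> y \<in> V b \<Longrightarrow> br x y = - s (eps a b) (br y x)"
  by (simp add: br_hom scale_right_diff_distrib eps_skew)

lemma pl_ax: "x \<in> V a \<Longrightarrow> y \<in> V b \<Longrightarrow> z \<in> V c \<Longrightarrow>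
   m (m x y) z - m x (m y z) = s (eps a b) (m (m y x) z - m y (m x z))"
  using pl unfolding prelie_color_def by blast

definition q where "q a b x y z = m (m x y) z - m x (m y z) - s (eps a b) (m (m y x) z - m y (m x z))"

lemma q0: "x \<in> V a \<Longrightarrow> y \<in> V b \<Longrightarrow> z \<in> V c \<Longrightarrow> q a b x y z = 0"
  unfolding q_def by (subst pl_ax, assumption+, rule diff_self)

lemma jacobi_q:
  assumes x: "x \<in> V a" and y: "y \<in> V b" and z: "z \<in> V c"
  shows "s (eps c a) (br x (br y z)) + s (eps b c) (br z (br x y)) + s (eps a b) (br y (br z x))
    = - s (eps c a) (q a b x y z) - s (eps a b) (q b c y z x) - s (eps b c) (q c a z x y)"
proof -
  have yz: "br y z \<in> V (b + c)" and zx: "br z x \<in> V (c + a)" and xy: "br x y \<in> V (a + b)"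
    using br_deg x y z by auto
  show ?thesis
    unfolding br_hom[OF x yz] br_hom[OF z xy] br_hom[OF y zx]
    unfolding br_hom[OF x y] br_hom[OF y z] br_hom[OF z x]
    by (simp add: q_def eps_add algebra_simps skew_cancel)
qed


lemma LIE: "lie_color s V eps br"
proof -
  have J: "s (eps c a) (br x (br y z)) + s (eps b c) (br z (br x y)) + s (eps a b) (br y (br z x)) = 0"
    if "x \<in> V a" "y \<in> V b" "z \<in> V c" for a b c x y z
    using jacobi_q[OF that] q0 that by simp
  have A: "\<forall>a b x y. x \<in> V a \<longrightarrow> y \<in> V b \<longrightarrow> br x y = - s (eps a b) (br y x)"
    by (intro allI impI, erule (1) br_anti)
  have B: "\<forall>a b x y. x \<in> V a \<longrightarrow> y \<in> V b \<longrightarrow> br x y \<in> V (a + b)"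
    by (intro allI impI, erule (1) br_deg)
  have C: "\<forall>a b c x y z. x \<in> V a \<longrightarrow> y \<in> V b \<longrightarrow> z \<in> V c \<longrightarrow>
        s (eps c a) (br x (br y z)) + s (eps b c) (br z (br x y)) + s (eps a b) (br y (br z x)) = 0"
    by (intro allI impI, erule (2) J)
  show ?thesis unfolding lie_color_def graded_op_def
    apply (rule conjI, rule gs)
    apply (rule conjI, rule br_bil)
    apply (rule conjI, rule B)
    apply (rule conjI, rule A)
    by (rule C)
qed

abbreviation f1 where "f1 \<equiv> F1 s V eps d m"
abbreviation f2 where "f2 \<equiv> F2 s V eps d m"
abbreviation PP where "PP \<equiv> Pfm s eps dot br"

lemma F_lin3 [simp]:
  "f1 a b x y (u + v) = f1 a b x y u + f1 a b x y v"
  "f1 a b x y (s k u) = s k (f1 a b x y u)"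
  "f2 a b x y (u + v) = f2 a b x y u + f2 a b x y v"
  "f2 a b x y (s k u) = s k (f2 a b x y u)"
  "f1 a b x y 0 = 0" "f2 a b x y 0 = 0"
  "PP a b x y (u + v) = PP a b x y u + PP a b x y v"
  "PP a b x y 0 = 0"
  by (simp_all add: F1_def F2_def Pfm_def algebra_simps scale_left_commute)

lemma P_F:
  assumes x: "x \<in> V a" and y: "y \<in> V b" and z: "z \<in> V c"
  shows "PP a b x y z = f1 a b x y z + s (eps b c) (f1 a c x z y) + s (eps a (b + c)) (f2 b c y z x)"
proof -
  have yz: "dot y z \<in> V (b + c)" and xz: "br x z \<in> V (a + c)" and xy: "br x y \<in> V (a + b)"
    using br_deg dot_deg x y z by auto
  show ?thesis
    unfolding Pfm_def F1_def F2_def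
    unfolding br_hom[OF x yz] dot_hom[OF xy z] dot_hom[OF y xz]
    unfolding br_hom[OF x y] br_hom[OF x z] dot_hom[OF y z] br_hom[OF x z]
    by (simp add: eps_add algebra_simps skew_cancel)
qed


lemma P_deg: "x \<in> V a \<Longrightarrow> y \<in> V b \<Longrightarrow> z \<in> V c \<Longrightarrow> PP a b x y z \<in> V (a + b + c)"
proof -
  assume x: "x \<in> V a" and y: "y \<in> V b" and z: "z \<in> V c"
  have 1: "br x (dot y z) \<in> V (a + b + c)" using br_deg[OF x dot_deg[OF y z]] by (simp add: add.assoc)
  have 2: "dot (br x y) z \<in> V (a + b + c)" using dot_deg[OF br_deg[OF x y] z] by simp
  have 3: "dot y (br x z) \<in> V (a + b + c)" using dot_deg[OF y br_deg[OF x z]] by (simp add: add_ac)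
  show ?thesis unfolding Pfm_def using 1 2 3 by (intro Vdiff Vscale)
qed

lemma ax1: "x \<in> V a \<Longrightarrow> y \<in> V b \<Longrightarrow> z \<in> V c \<Longrightarrow> w \<in> V e \<Longrightarrow>
  f1 (a + b) c (dot x y) z w = d x (f1 b c y z w) + s (eps a b) (d y (f1 a c x z w))"
  using pre unfolding pre_F_manifold_color_def by blast

lemma ax2: "x \<in> V a \<Longrightarrow> y \<in> V b \<Longrightarrow> z \<in> V c \<Longrightarrow> w \<in> V e \<Longrightarrow>
  d (f1 a b x y z + s (eps b c) (f1 a c x z y) + s (eps a (b + c)) (f2 b c y z x)) w =
    s (eps a (b + c)) (f2 b c y z (d x w)) - d x (f2 b c y z w)"
  using pre unfolding pre_F_manifold_color_def by blast

lemma ax2P: "x \<in> V a \<Longrightarrow> y \<in> V b \<Longrightarrow> z \<in> V c \<Longrightarrow> w \<in> V e \<Longrightarrow>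
  d (PP a b x y z) w = s (eps a (b + c)) (f2 b c y z (d x w)) - d x (f2 b c y z w)"
  by (subst P_F, assumption+, rule ax2)

lemma F2x: assumes x: "x \<in> V a" and z: "z \<in> V c" and w: "w \<in> V e" and y: "y \<in> V b"
  shows "f2 c e z w (d x y) = s (eps (c + e) a) (d (PP a c x z w) y + d x (f2 c e z w y))"
  unfolding ax2P[OF x z w y] by (simp add: skew_cancel(1))

lemma HM_hom:
  assumes x: "x \<in> V a" and y: "y \<in> V b" and z: "z \<in> V c" and w: "w \<in> V e"
  shows "PP (a + b) c (dot x y) z w = dot x (PP b c y z w) + s (eps a b) (dot y (PP a c x z w))"
proof -
  have xy: "dot x y \<in> V (a + b)" using dot_deg x y by auto
  have Py: "PP b c y z w \<in> V (b + c + e)" and Px: "PP a c x z w \<in> V (a + c + e)"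
    using P_deg x y z w by auto
  have Dx: "d x (PP b c y z w) = d x (f1 b c y z w) + s (eps c e) (d x (f1 b e y w z))
      + s (eps b (c + e)) (d x (f2 c e z w y))"
    by (simp add: P_F[OF y z w])
  have Dy: "d y (PP a c x z w) = d y (f1 a c x z w) + s (eps c e) (d y (f1 a e x w z))
      + s (eps a (c + e)) (d y (f2 c e z w x))"
    by (simp add: P_F[OF x z w])
  show ?thesis
    unfolding P_F[OF xy z w] ax1[OF x y z w] ax1[OF x y w z]
    unfolding dot_hom[OF x y] F_lin3
      F2x[OF x z w y] F2x[OF y z w x] dot_hom[OF x Py] dot_hom[OF y Px] Dx Dy
    by (simp add: eps_add algebra_simps skew_cancel)
qed

lemma HM: "x \<in> V a \<Longrightarrow> y \<in> V b \<Longrightarrow> z \<in> V c \<Longrightarrow>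
  PP (a + b) c (dot x y) z w = dot x (PP b c y z w) + s (eps a b) (dot y (PP a c x z w))"
  by (induction w rule: graded_induct[OF gs]) (auto simp: HM_hom scale_right_distrib)

lemma FMC: "F_manifold_color s V eps dot br"
proof -
  have H: "\<forall>a b c x y z w. x \<in> V a \<longrightarrow> y \<in> V b \<longrightarrow> z \<in> V c \<longrightarrow>
        PP (a + b) c (dot x y) z w = dot x (PP b c y z w) + s (eps a b) (dot y (PP a c x z w))"
    by (intro allI impI, erule (2) HM)
  show ?thesis unfolding F_manifold_color_def
    apply (rule conjI, rule ECA)
    apply (rule conjI, rule LIE)
    by (rule H)
qed

lemma rep1: "x \<in> V a \<Longrightarrow> y \<in> V b \<Longrightarrow> m (br x y) v = m x (m y v) - s (eps a b) (m y (m x v))"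
proof -
  assume x: "x \<in> V a" and y: "y \<in> V b"
  have "m (br x y) v' = m x (m y v') - s (eps a b) (m y (m x v'))" if "v' \<in> V c" for v' c
  proof -
    have "m (m x y) v' - m x (m y v') = s (eps a b) (m (m y x) v' - m y (m x v'))"
      by (rule pl_ax[OF x y that])
    then show ?thesis unfolding br_hom[OF x y]
      by (simp add: algebra_simps)
  qed
  then show ?thesis by (induction v rule: graded_induct[OF gs]) (auto simp: algebra_simps)
qed

lemma rep2: "d (dot x y) v = d x (d y v)"
proof (induction x arbitrary: y rule: graded_induct[OF gs])
  case (3 a x)
  then show ?case
    by (induction y rule: graded_induct[OF gs]) (auto simp: zin')
qed auto

lemma rep3: "x \<in> V a \<Longrightarrow> y \<in> V b \<Longrightarrow> z \<in> V c \<Longrightarrow>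
  f1 (a + b) c (dot x y) z w = d x (f1 b c y z w) + s (eps a b) (d y (f1 a c x z w))"
  by (induction w rule: graded_induct[OF gs]) (auto simp: ax1 scale_right_distrib)

lemma rep4: "x \<in> V a \<Longrightarrow> y \<in> V b \<Longrightarrow> z \<in> V c \<Longrightarrow>
  d (PP a b x y z) w = s (eps a (b + c)) (f2 b c y z (d x w)) - d x (f2 b c y z w)"
  by (induction w rule: graded_induct[OF gs]) (auto simp: ax2P scale_right_distrib algebra_simps)

lemma REP: "fm_representation s V eps dot br s V m d"
proof -
  have A: "\<forall>a b x y v. x \<in> V a \<longrightarrow> y \<in> V b \<longrightarrow>
        m (br x y) v = m x (m y v) - s (eps a b) (m y (m x v))"
    by (intro allI impI, erule (1) rep1)
  have B: "\<forall>x y v. d (dot x y) v = d x (d y v)" by (intro allI, rule rep2)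
  have C: "\<forall>a b c x1 x2 x3 v. x1 \<in> V a \<longrightarrow> x2 \<in> V b \<longrightarrow> x3 \<in> V c \<longrightarrow>
      f1 (a + b) c (dot x1 x2) x3 v = d x1 (f1 b c x2 x3 v) + s (eps a b) (d x2 (f1 a c x1 x3 v))"
    by (intro allI impI, erule (2) rep3)
  have D: "\<forall>a b c x1 x2 x3 v. x1 \<in> V a \<longrightarrow> x2 \<in> V b \<longrightarrow> x3 \<in> V c \<longrightarrow>
      d (PP a b x1 x2 x3) v = s (eps a (b + c)) (f2 b c x2 x3 (d x1 v)) - d x1 (f2 b c x2 x3 v)"
    by (intro allI impI, erule (2) rep4)
  have go: "graded_op V V m" "graded_op V V d" unfolding graded_op_def using m_deg d_deg by blast+
  show ?thesis unfolding fm_representation_def Let_def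
    apply (rule conjI, rule gs)
    apply (rule conjI, rule m_bil)
    apply (rule conjI, rule go)
    apply (rule conjI, rule d_bil)
    apply (rule conjI, rule go)
    apply (rule conjI, rule A)
    apply (rule conjI, rule B)
    apply (rule conjI)
    using C apply (simp only: F1_def)
    using D by (simp only: F2_def)
qed

end

theorem theorem4p4:
  fixes s :: "'k::field_char_0 \<Rightarrow> 'v::ab_group_add \<Rightarrow> 'v"
    and V :: "'g::ab_group_add \<Rightarrow> 'v set"
    and eps :: "'g \<Rightarrow> 'g \<Rightarrow> 'k"
    and d m :: "'v \<Rightarrow> 'v \<Rightarrow> 'v"
  assumes "alg_closed_field TYPE('k)"
    and "skew_bicharacter eps"
    and "graded_space s V"
    and "fin_dim s"
    and "pre_F_manifold_color s V eps d m"
  shows "F_manifold_color s V eps (ind_dot s V eps d) (ind_bracket s V eps m)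
         \<and> fm_representation s V eps (ind_dot s V eps d) (ind_bracket s V eps m) s V m d"
proof -
  interpret P: preF s V eps d m using assms(2,5) by unfold_locales
  show ?thesis using P.FMC P.REP by blast
qed

end
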